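(* For every positive integer $k$, $$4k-2 < r_<(NM_k, K_3) \leq 6k.$$
   Context: An ordered graph on $[N]$ is a graph with vertex set $\{1,\dots,N\}$ equipped with the natural order. Given a red/blue coloring of the edges of the complete graph on $[N]$, a red (ordered) copy of an ordered graph $G$ on $[p]$ is a strictly increasing map $\varphi:[p]\to[N]$ such that $\varphi(u)\varphi(v)$ is red for every edge $uv$ of $G$. The ordered Ramsey number $r_<(G,K_3)$ is the smallest $N$ such that every red/blue coloring of the edges of the complete graph on $[N]$ contains either a red ordered copy of $G$ or a blue triangle. The nested matching $NM_k$ is the ordered graph on $[2k]$ in which $\{i,j\}$ is an edge if and only if $i+j=2k+1$. *)

theory Defs
  imports Main
begin

text \<open>A red/blue colouring of the edges of the complete graph on [N] is represented by
  a predicate c :: nat => nat => bool; the edge {x,y} (x /= y) is red iff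
  red_edge c x y holds, where the value c x y is only consulted for x < y.\<close>

definition red_edge :: "(nat \<Rightarrow> nat \<Rightarrow> bool) \<Rightarrow> nat \<Rightarrow> nat \<Rightarrow> bool" where
  "red_edge c x y = (if x < y then c x y else c y x)"

text \<open>An ordered graph G on [p] is given by its (symmetric) edge predicate E on {1..p}.\<close>

definition has_red_copy ::
  "nat \<Rightarrow> (nat \<Rightarrow> nat \<Rightarrow> bool) \<Rightarrow> nat \<Rightarrow> (nat \<Rightarrow> nat \<Rightarrow> bool) \<Rightarrow> bool" where
  "has_red_copy p E N c \<longleftrightarrow>
     (\<exists>\<phi>. strict_mono_on {1..p} \<phi> \<and> \<phi> ` {1..p} \<subseteq> {1..N} \<and>
        (\<forall>u\<in>{1..p}. \<forall>v\<in>{1..p}. E u v \<longrightarrow> red_edge c (\<phi> u) (\<phi> v)))"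

definition has_blue_triangle :: "nat \<Rightarrow> (nat \<Rightarrow> nat \<Rightarrow> bool) \<Rightarrow> bool" where
  "has_blue_triangle N c \<longleftrightarrow>
     (\<exists>x\<in>{1..N}. \<exists>y\<in>{1..N}. \<exists>z\<in>{1..N}. x < y \<and> y < z \<and>
        \<not> red_edge c x y \<and> \<not> red_edge c y z \<and> \<not> red_edge c x z)"

definition ordered_ramsey_K3 :: "nat \<Rightarrow> (nat \<Rightarrow> nat \<Rightarrow> bool) \<Rightarrow> nat" where
  "ordered_ramsey_K3 p E =
     (LEAST N. \<forall>c. has_red_copy p E N c \<or> has_blue_triangle N c)"

definition nested_matching :: "nat \<Rightarrow> nat \<Rightarrow> nat \<Rightarrow> bool" where
  "nested_matching k i j \<longleftrightarrow> i \<noteq> j \<and> i + j = 2 * k + 1"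

end

theory Submission
  imports Defs
begin

lemma red_sym: "red_edge c x y = red_edge c y x"
  unfolding red_edge_def by auto

lemma blue_tri:
  assumes "x \<in> {1..N}" "y \<in> {1..N}" "z \<in> {1..N}" "x \<noteq> y" "y \<noteq> z" "x \<noteq> z"
    "\<not> red_edge c x y" "\<not> red_edge c y z" "\<not> red_edge c x z"
  shows "has_blue_triangle N c"
proof -
  consider "x<y" "y<z" | "x<z" "z<y" | "y<x" "x<z" | "y<z" "z<x" | "z<x" "x<y" | "z<y" "y<x"
    using assms(4-6) by linarith
  then show ?thesis
  proof cases
    case 1 then show ?thesis unfolding has_blue_triangle_def using assms by blast
  next
    case 2 then show ?thesis unfolding has_blue_triangle_def using assms red_sym[of c] by metis
  next
    case 3 then show ?thesis unfolding has_blue_triangle_def using assms red_sym[of c] by metis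
  next
    case 4 then show ?thesis unfolding has_blue_triangle_def using assms red_sym[of c] by metis
  next
    case 5 then show ?thesis unfolding has_blue_triangle_def using assms red_sym[of c] by metis
  next
    case 6 then show ?thesis unfolding has_blue_triangle_def using assms red_sym[of c] by metis
  qed
qed

lemma smono_ge:
  fixes \<phi> :: "nat \<Rightarrow> nat"
  assumes "strict_mono_on {1..p} \<phi>" "1 \<le> i" "i \<le> j" "j \<le> p"
  shows "\<phi> i + (j - i) \<le> \<phi> j"
proof -
  have "j \<le> p \<Longrightarrow> \<phi> i + (j - i) \<le> \<phi> j" using assms(3)
  proof (induction j rule: dec_induct)
    case base then show ?case by simp
  next
    case (step n)
    have "\<phi> n < \<phi> (Suc n)" using assms(1,2) step by (auto intro: strict_mono_onD)
    then show ?case using step by simp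
  qed
  then show ?thesis using assms by simp
qed

lemma clique_copy:
  assumes "S \<subseteq> {1..N}" "card S \<ge> 2*k" "\<forall>x\<in>S. \<forall>y\<in>S. x \<noteq> y \<longrightarrow> red_edge c x y"
  shows "has_red_copy (2*k) (nested_matching k) N c"
proof -
  have fin: "finite S" using assms(1) finite_subset by blast
  define l where "l = sorted_list_of_set S"
  have len: "length l = card S" unfolding l_def using fin by simp
  have sl: "sorted_wrt (<) l" unfolding l_def using fin by simp
  have setl: "set l = S" unfolding l_def using fin by simp
  define \<phi> where "\<phi> i = l ! (i - 1)" for i
  have mem: "\<phi> i \<in> S" if "i \<in> {1..2*k}" for i
    using that len assms(2) setl unfolding \<phi>_def by (metis atLeastAtMost_iff diff_less dual_order.strict_trans2 less_one not_le nth_mem zero_less_one le_trans linorder_not_less Suc_le_eq Suc_pred' less_le_trans)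
  have sm: "strict_mono_on {1..2*k} \<phi>"
  proof (rule strict_mono_onI)
    fix r s assume "r \<in> {1..2*k}" "s \<in> {1..2*k}" "r < s"
    then show "\<phi> r < \<phi> s" unfolding \<phi>_def using len assms(2)
      using sorted_wrt_nth_less[OF sl] by auto
  qed
  show ?thesis unfolding has_red_copy_def
  proof (intro exI[of _ \<phi>] conjI)
    show "strict_mono_on {1..2*k} \<phi>" by (rule sm)
    show "\<phi> ` {1..2*k} \<subseteq> {1..N}" using mem assms(1) by blast
    show "\<forall>u\<in>{1..2*k}. \<forall>v\<in>{1..2*k}. nested_matching k u v \<longrightarrow> red_edge c (\<phi> u) (\<phi> v)"
    proof (intro ballI impI)
      fix u v assume uv: "u \<in> {1..2*k}" "v \<in> {1..2*k}" "nested_matching k u v"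
      then have "u \<noteq> v" unfolding nested_matching_def by auto
      then have "\<phi> u \<noteq> \<phi> v" using sm uv(1,2)
        by (metis linorder_neqE_nat strict_mono_onD less_irrefl)
      then show "red_edge c (\<phi> u) (\<phi> v)" using assms(3) mem uv by blast
    qed
  qed
qed


lemma diag_copy:
  assumes "A \<subseteq> {1..N}" "card A \<ge> k"
    "\<forall>a\<in>A. a + a < s \<and> s - a \<le> N \<and> red_edge c a (s - a)"
  shows "has_red_copy (2*k) (nested_matching k) N c"
proof -
  have fin: "finite A" using assms(1) finite_subset by blast
  define l where "l = sorted_list_of_set A"
  have len: "length l = card A" unfolding l_def using fin by simp
  have sl: "sorted_wrt (<) l" unfolding l_def using fin by simp
  have setl: "set l = A" unfolding l_def using fin by simp
  have inA: "l ! i \<in> A" if "i < k" for i using that len assms(2) setl nth_mem by (metis less_le_trans)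
  have lt: "l ! i < l ! j" if "i < j" "j < k" for i j
    using sorted_wrt_nth_less[OF sl] that len assms(2) by auto
  have P: "l ! i + l ! i < s \<and> s - l ! i \<le> N \<and> red_edge c (l ! i) (s - l ! i) \<and> 1 \<le> l ! i" if "i < k" for i
    using inA[OF that] assms(3) assms(1) by auto
  define \<phi> where "\<phi> i = (if i \<le> k then l ! (i - 1) else s - l ! (2*k - i))" for i
  have mem: "\<phi> i \<in> {1..N}" if "i \<in> {1..2*k}" for i
  proof (cases "i \<le> k")
    case True
    then have "i - 1 < k" using that by auto
    then have "l ! (i - 1) \<in> {1..N}" using inA assms(1) by blast
    then show ?thesis unfolding \<phi>_def using True by simp
  next
    case False
    then have "2*k - i < k" using that by auto
    then show ?thesis unfolding \<phi>_def using False P[of "2*k-i"] by auto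
  qed
  have sm: "strict_mono_on {1..2*k} \<phi>"
  proof (rule strict_mono_onI)
    fix r t assume rt: "r \<in> {1..2*k}" "t \<in> {1..2*k}" "r < t"
    show "\<phi> r < \<phi> t"
    proof (cases "t \<le> k")
      case True
      then show ?thesis unfolding \<phi>_def using rt lt[of "r-1" "t-1"] by auto
    next
      case False
      note tF = False
      show ?thesis
      proof (cases "r \<le> k")
        case True
        have a1: "r - 1 < k" "2*k - t < k" using rt True tF by auto
        have "l ! (r-1) < s - l ! (2*k - t)"
          using conjunct1[OF P[OF a1(1)]] conjunct1[OF P[OF a1(2)]] by linarith
        then show ?thesis unfolding \<phi>_def using True tF by auto
      next
        case False
        have "l ! (2*k - t) < l ! (2*k - r)" using lt rt False tF by auto
        moreover have "2*k - r < k" using rt False by auto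
        ultimately have "s - l ! (2*k - r) < s - l ! (2*k - t)"
          using conjunct1[OF P[of "2*k-r"]] by linarith
        then show ?thesis unfolding \<phi>_def using False tF by simp
      qed
    qed
  qed
  show ?thesis unfolding has_red_copy_def
  proof (intro exI[of _ \<phi>] conjI)
    show "strict_mono_on {1..2*k} \<phi>" by (rule sm)
    show "\<phi> ` {1..2*k} \<subseteq> {1..N}" using mem by blast
    show "\<forall>u\<in>{1..2*k}. \<forall>v\<in>{1..2*k}. nested_matching k u v \<longrightarrow> red_edge c (\<phi> u) (\<phi> v)"
    proof (intro ballI impI)
      fix u v assume uv: "u \<in> {1..2*k}" "v \<in> {1..2*k}" "nested_matching k u v"
      then have v: "v = 2*k + 1 - u" unfolding nested_matching_def by auto
      show "red_edge c (\<phi> u) (\<phi> v)"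
      proof (cases "u \<le> k")
        case True
        then have "\<not> v \<le> k" "2*k - v = u - 1" "u - 1 < k" using v uv by auto
        then show ?thesis unfolding \<phi>_def using True P by auto
      next
        case False
        then have "v \<le> k" "v - 1 = 2*k - u" "2*k - u < k" using v uv by auto
        then show ?thesis unfolding \<phi>_def using False P red_sym[of c] by metis
      qed
    qed
  qed
qed


lemma upper:
  assumes k: "k \<ge> 1"
  shows "has_red_copy (2*k) (nested_matching k) (6*k) c \<or> has_blue_triangle (6*k) c"
proof (rule ccontr)
  define N where "N = 6*k"
  assume "\<not> ?thesis"
  then have nored: "\<not> has_red_copy (2*k) (nested_matching k) N c"
    and nob: "\<not> has_blue_triangle N c" unfolding N_def by auto
  define Rn where "Rn a = {b\<in>{1..N}. b \<noteq> a \<and> red_edge c a b}" for a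
  define Bn where "Bn a = {b\<in>{1..N}. b \<noteq> a \<and> \<not> red_edge c a b}" for a
  have Bcard: "card (Bn a) \<le> 2*k - 1" if a: "a \<in> {1..N}" for a
  proof (rule ccontr)
    assume "\<not> ?thesis"
    then have "card (Bn a) \<ge> 2*k" by linarith
    moreover have "Bn a \<subseteq> {1..N}" unfolding Bn_def by auto
    moreover have "\<forall>x\<in>Bn a. \<forall>y\<in>Bn a. x \<noteq> y \<longrightarrow> red_edge c x y"
    proof (intro ballI impI)
      fix x y assume xy: "x \<in> Bn a" "y \<in> Bn a" "x \<noteq> y"
      show "red_edge c x y"
      proof (rule ccontr)
        assume "\<not> red_edge c x y"
        then have "has_blue_triangle N c"
          using xy a unfolding Bn_def
          by (intro blue_tri[of a N x y c]) (auto simp: red_sym[of c x a])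
        then show False using nob by simp
      qed
    qed
    ultimately have "has_red_copy (2*k) (nested_matching k) N c" using clique_copy[of "Bn a" N k c] by simp
    then show False using nored by simp
  qed
  have Rcard: "N - 2*k \<le> card (Rn a)" if a: "a \<in> {1..N}" for a
  proof -
    have "Rn a \<union> Bn a = {1..N} - {a}" "Rn a \<inter> Bn a = {}" unfolding Rn_def Bn_def by auto
    then have "card (Rn a) + card (Bn a) = N - 1"
      by (metis card_Diff_singleton card_Un_disjoint card_atLeastAtMost diff_Suc_1 finite_Diff finite_Un finite_atLeastAtMost a)
    then show ?thesis using Bcard[OF a] k unfolding N_def by linarith
  qed
  define ORP where "ORP = Sigma {1..N} Rn"
  have finR: "finite (Rn a)" for a unfolding Rn_def by auto
  have "card ORP = (\<Sum>a\<in>{1..N}. card (Rn a))" unfolding ORP_def using finR by simp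
  moreover have "card {1..N} * (N - 2*k) \<le> (\<Sum>a\<in>{1..N}. card (Rn a))"
    using sum_bounded_below[of "{1..N}" "N - 2*k" "\<lambda>a. card (Rn a)"] Rcard by simp
  ultimately have low: "N * (N - 2*k) \<le> card ORP" by simp
  define E where "E s = {p \<in> ORP. fst p + snd p = s}" for s
  have Ecard: "card (E s) \<le> 2*(k-1)" for s
  proof -
    define L where "L = {p \<in> E s. fst p < snd p}"
    define sw where "sw = (\<lambda>p::nat\<times>nat. (snd p, fst p))"
    have sub: "E s \<subseteq> L \<union> sw ` L"
    proof
      fix p assume p: "p \<in> E s"
      obtain a b where ab: "p = (a,b)" by fastforce
      have "a \<noteq> b" "a \<in> {1..N}" "b \<in> {1..N}" "red_edge c a b" "a + b = s"
        using p ab unfolding E_def ORP_def Rn_def by auto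
      then have "a < b \<or> b < a" by auto
      then show "p \<in> L \<union> sw ` L"
      proof
        assume "a < b" then show ?thesis using p ab unfolding L_def by auto
      next
        assume ba: "b < a"
        have "(b,a) \<in> L" unfolding L_def E_def ORP_def Rn_def
          using ba \<open>a \<in> {1..N}\<close> \<open>b \<in> {1..N}\<close> \<open>red_edge c a b\<close> \<open>a + b = s\<close> red_sym[of c a b] by auto
        then show ?thesis unfolding sw_def using ab by force
      qed
    qed
    have finL: "finite L" unfolding L_def E_def ORP_def using finR by auto
    have injL: "inj_on fst L" unfolding inj_on_def L_def E_def by auto
    have "card (fst ` L) \<le> k - 1"
    proof (rule ccontr)
      assume "\<not> ?thesis"
      then have "card (fst ` L) \<ge> k" by linarith
      moreover have "fst ` L \<subseteq> {1..N}" unfolding L_def E_def ORP_def by auto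
      moreover have "\<forall>a\<in>fst ` L. a + a < s \<and> s - a \<le> N \<and> red_edge c a (s - a)"
      proof
        fix a assume "a \<in> fst ` L"
        then obtain b where "(a,b) \<in> L" by force
        then show "a + a < s \<and> s - a \<le> N \<and> red_edge c a (s - a)"
          unfolding L_def E_def ORP_def Rn_def by auto
      qed
      ultimately have "has_red_copy (2*k) (nested_matching k) N c" using diag_copy[of "fst ` L" N k s c] by simp
      then show False using nored by simp
    qed
    then have cL: "card L \<le> k - 1" using card_image[OF injL] by simp
    have "card (E s) \<le> card (L \<union> sw ` L)" using sub finL by (intro card_mono) auto
    also have "\<dots> \<le> card L + card (sw ` L)" by (rule card_Un_le)
    also have "\<dots> \<le> card L + card L" using card_image_le[OF finL, of sw] by simp
    finally show ?thesis using cL by linarith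
  qed
  have "ORP \<subseteq> (\<Union>s\<in>{2..2*N}. E s)"
  proof
    fix p assume p: "p \<in> ORP"
    then have "fst p + snd p \<in> {2..2*N}" unfolding ORP_def Rn_def by auto
    then show "p \<in> (\<Union>s\<in>{2..2*N}. E s)" unfolding E_def using p by blast
  qed
  then have "card ORP \<le> card (\<Union>s\<in>{2..2*N}. E s)"
    by (intro card_mono) (auto simp: E_def ORP_def finR)
  also have "\<dots> \<le> (\<Sum>s\<in>{2..2*N}. card (E s))" by (rule card_UN_le) simp
  also have "\<dots> \<le> card {2..2*N} * (2*(k-1))"
    using sum_bounded_above[of "{2..2*N}" "\<lambda>s. card (E s)" "2*(k-1)"] Ecard by simp
  finally have up: "card ORP \<le> (2*N - 1) * (2*(k-1))" by simp
  obtain m where m: "k = Suc m" using k by (cases k) auto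
  have "N * (N - 2*k) \<le> (2*N - 1) * (2*(k-1))" using low up by linarith
  then show False unfolding N_def m by (simp add: algebra_simps)
qed


lemma lower:
  assumes k: "k \<ge> 1" and N: "N \<le> 4*k - 2"
  shows "\<not> (has_red_copy (2*k) (nested_matching k) N (\<lambda>x y. (x < 2*k) = (y < 2*k))
           \<or> has_blue_triangle N (\<lambda>x y. (x < 2*k) = (y < 2*k)))"
proof -
  let ?c = "\<lambda>x y. (x < 2*k) = (y < 2*k)"
  have re: "red_edge ?c x y = ((x < 2*k) = (y < 2*k))" for x y unfolding red_edge_def by auto
  have "\<not> has_blue_triangle N ?c" unfolding has_blue_triangle_def re by auto
  moreover have "\<not> has_red_copy (2*k) (nested_matching k) N ?c"
  proof
    assume "has_red_copy (2*k) (nested_matching k) N ?c"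
    then obtain \<phi> where sm: "strict_mono_on {1..2*k} \<phi>" and im: "\<phi> ` {1..2*k} \<subseteq> {1..N}"
      and ed: "\<forall>u\<in>{1..2*k}. \<forall>v\<in>{1..2*k}. nested_matching k u v \<longrightarrow> red_edge ?c (\<phi> u) (\<phi> v)"
      unfolding has_red_copy_def by blast
    have "nested_matching k 1 (2*k)" unfolding nested_matching_def using k by auto
    then have r: "(\<phi> 1 < 2*k) = (\<phi> (2*k) < 2*k)" using ed k re by auto
    have g: "\<phi> 1 + (2*k - 1) \<le> \<phi> (2*k)" using smono_ge[OF sm, of 1 "2*k"] k by simp
    have "\<phi> 1 \<in> {1..N}" "\<phi> (2*k) \<in> {1..N}" using im k by (auto simp: image_subset_iff)
    then show False using r g N by auto
  qed
  ultimately show ?thesis by blast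
qed

theorem proposition2p1:
  fixes k :: nat
  assumes "k \<ge> 1"
  shows "4 * k - 2 < ordered_ramsey_K3 (2 * k) (nested_matching k)
         \<and> ordered_ramsey_K3 (2 * k) (nested_matching k) \<le> 6 * k"
proof -
  let ?P = "\<lambda>N. \<forall>c. has_red_copy (2*k) (nested_matching k) N c \<or> has_blue_triangle N c"
  have P6: "?P (6*k)" using upper[OF assms] by blast
  have le: "ordered_ramsey_K3 (2 * k) (nested_matching k) \<le> 6 * k"
    unfolding ordered_ramsey_K3_def by (rule Least_le) (rule P6)
  have PL: "?P (ordered_ramsey_K3 (2 * k) (nested_matching k))"
    unfolding ordered_ramsey_K3_def by (rule LeastI) (rule P6)
  have "4 * k - 2 < ordered_ramsey_K3 (2 * k) (nested_matching k)"
  proof (rule ccontr)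
    assume "\<not> ?thesis"
    then show False using lower[OF assms, of "ordered_ramsey_K3 (2 * k) (nested_matching k)"] PL by auto
  qed
  then show ?thesis using le by simp
qed

end
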